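(* Let $\Pi$ be a homogeneous Poisson point process in $\mathbb{R}^2$ of unit intensity. Let $A=(0,0)$, let $B$ be the point of $\Pi$ nearest to $A$ and $C$ the point of $\Pi$ second nearest to $A$. Let $a=\|B-C\|$. Then $a$ has density $\pi\,x\,\operatorname{erfc}\!\left(\sqrt{\pi}\,x/2\right)$ for $x>0$.
   Context: $\|\cdot\|$ is the Euclidean norm and $\operatorname{erfc}$ is the complementary error function. *)

theory Defs
  imports "HOL-Probability.Probability"
begin

definition erfc :: "real \<Rightarrow> real" where
  "erfc x = 2 / sqrt pi * (LBINT t:{x<..}. exp (- (t\<^sup>2)))"

definition unit_poisson_process :: "'a measure \<Rightarrow> ('a \<Rightarrow> (real^2) set) \<Rightarrow> bool" where
  "unit_poisson_process M X \<longleftrightarrow>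
     prob_space M \<and>
     (\<forall>\<omega>\<in>space M. \<forall>S. bounded S \<longrightarrow> finite (X \<omega> \<inter> S)) \<and>
     (\<forall>S \<in> sets borel. bounded S \<longrightarrow>
        (\<lambda>\<omega>. card (X \<omega> \<inter> S)) \<in> measurable M (count_space UNIV) \<and>
        (\<forall>k. measure M {\<omega> \<in> space M. card (X \<omega> \<inter> S) = k}
               = measure lborel S ^ k / fact k * exp (- measure lborel S))) \<and>
     (\<forall>\<S>. finite \<S> \<and> disjoint \<S> \<and> \<S> \<subseteq> sets borel \<and> (\<forall>S\<in>\<S>. bounded S) \<longrightarrow>
        prob_space.indep_vars M (\<lambda>_. count_space UNIV) (\<lambda>S \<omega>. card (X \<omega> \<inter> S)) \<S>)"

definition nearest_two :: "(real^2) set \<Rightarrow> real^2 \<Rightarrow> real^2 \<Rightarrow> bool" where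
  "nearest_two Y b c \<longleftrightarrow> b \<in> Y \<and> c \<in> Y \<and> b \<noteq> c \<and> norm b \<le> norm c \<and>
     (\<forall>p \<in> Y - {b, c}. norm c \<le> norm p)"

end

theory Submission
  imports Defs "HOL-Real_Asymp.Real_Asymp"
begin

lemma emeasure_ball_R2: "r \<ge> 0 \<Longrightarrow> emeasure lborel (ball (c::real^2) r) = ennreal (pi * r^2)"
  using emeasure_ball[of r c] by (simp add: unit_ball_vol_2)

lemma emeasure_cball_R2: "r \<ge> 0 \<Longrightarrow> emeasure lborel (cball (c::real^2) r) = ennreal (pi * r^2)"
  using emeasure_cball[of r c] by (simp add: unit_ball_vol_2)

definition rad :: "real \<Rightarrow> ennreal" where
  "rad r = ennreal (2*pi*r) * indicator {0..} r"

lemma rad_measurable[measurable]: "rad \<in> borel_measurable borel"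
  unfolding rad_def by measurable

lemma distr_norm_R2:
  "distr (lborel::(real^2) measure) borel norm = density lborel rad"
proof (rule measure_eqI_generator_eq[where E="range (\<lambda>a. {..a::real})" and \<Omega>=UNIV
      and A="\<lambda>i. {..real i}"])
  show "Int_stable (range (\<lambda>a. {..a::real}))"
    by (auto simp: Int_stable_def)
  show "range (\<lambda>a. {..a::real}) \<subseteq> Pow UNIV" by auto
  show "sets (distr (lborel::(real^2) measure) borel norm) = sigma_sets UNIV (range (\<lambda>a. {..a::real}))"
    by (simp add: borel_eq_atMost)
  show "sets (density lborel rad) = sigma_sets UNIV (range (\<lambda>a. {..a::real}))"
    by (simp add: borel_eq_atMost)
  show "range (\<lambda>i. {..real i}) \<subseteq> range (\<lambda>a. {..a::real})" by auto
  show "(\<Union>i. {..real i}) = UNIV"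
    by (auto simp: real_arch_simple)
  have eq: "emeasure (distr (lborel::(real^2) measure) borel norm) {..b} = emeasure (density lborel rad) {..b}" for b
  proof (cases "b \<ge> 0")
    case True
    have "emeasure (distr (lborel::(real^2) measure) borel norm) {..b} = emeasure lborel (cball (0::real^2) b)"
      by (subst emeasure_distr) (auto intro!: arg_cong[where f="emeasure lborel"])
    also have "\<dots> = ennreal (pi * b^2)" using True by (rule emeasure_cball_R2)
    also have "\<dots> = (\<integral>\<^sup>+x. ennreal (2*pi*x) * indicator {0 .. b} x \<partial>lborel)"
      by (subst nn_integral_FTC_Icc[where F="\<lambda>x. pi * x^2"])
         (auto intro!: derivative_eq_intros simp: True)
    also have "\<dots> = emeasure (density lborel rad) {..b}"
      by (subst emeasure_density) (auto simp: rad_def intro!: nn_integral_cong split: split_indicator)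
    finally show ?thesis .
  next
    case False
    have "emeasure (distr (lborel::(real^2) measure) borel norm) {..b} = emeasure lborel ({}::(real^2) set)"
    proof -
      have "norm -` {..b} = ({}::(real^2) set)" using False by (auto simp: not_le) (meson norm_ge_zero order_trans not_le)
      then show ?thesis by (subst emeasure_distr) auto
    qed
    also have "\<dots> = (\<integral>\<^sup>+x. 0 \<partial>(lborel::real measure))" by simp
    also have "\<dots> = (\<integral>\<^sup>+x. rad x * indicator {..b} x \<partial>lborel)"
      using False by (intro nn_integral_cong) (auto simp: rad_def split: split_indicator)
    also have "\<dots> = emeasure (density lborel rad) {..b}"
      by (subst emeasure_density) auto
    finally show ?thesis .
  qed
  show "emeasure (distr (lborel::(real^2) measure) borel norm) X = emeasure (density lborel rad) X"
    if "X \<in> range (\<lambda>a. {..a::real})" for X using that eq by auto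
  show "emeasure (distr (lborel::(real^2) measure) borel norm) {..real i} \<noteq> \<infinity>" for i
  proof -
    have "norm -` {..real i} = cball (0::real^2) (real i)" by (auto simp: cball_def dist_norm)
    then show ?thesis using emeasure_cball_R2[of "real i" 0]
      by (subst emeasure_distr) auto
  qed
qed

lemma polar_R2:
  assumes [measurable]: "\<phi> \<in> borel_measurable borel"
  shows "(\<integral>\<^sup>+w. \<phi> (norm w) \<partial>(lborel::(real^2) measure)) = (\<integral>\<^sup>+r. rad r * \<phi> r \<partial>lborel)"
proof -
  have "(\<integral>\<^sup>+w. \<phi> (norm w) \<partial>(lborel::(real^2) measure)) = (\<integral>\<^sup>+r. \<phi> r \<partial>(distr (lborel::(real^2) measure) borel norm))"
    by (subst nn_integral_distr) auto
  also have "\<dots> = (\<integral>\<^sup>+r. rad r * \<phi> r \<partial>lborel)"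
    unfolding distr_norm_R2 by (subst nn_integral_density) auto
  finally show ?thesis .
qed

lemma fin_bounded:
  fixes S :: "'a::euclidean_space set"
  assumes "S \<in> sets borel" "bounded S"
  shows "emeasure lborel S < \<infinity>"
proof -
  obtain R where "\<forall>x\<in>S. norm x \<le> R" using assms(2) by (auto simp: bounded_iff)
  then have "S \<subseteq> cball 0 R" by (auto simp: dist_norm)
  then have "emeasure lborel S \<le> emeasure lborel (cball (0::'a) R)"
    by (intro emeasure_mono) auto
  also have "\<dots> < \<infinity>" by (rule emeasure_lborel_cball_finite)
  finally show ?thesis .
qed

lemma emeasure_lborel_measure_bounded:
  fixes S :: "'a::euclidean_space set"
  assumes "S \<in> sets borel" "bounded S"
  shows "emeasure lborel S = ennreal (measure lborel S)"
  using fin_bounded[OF assms] by (intro emeasure_eq_ennreal_measure) auto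

lemma distr_orth_R2:
  fixes f :: "real^2 \<Rightarrow> real^2"
  assumes f: "orthogonal_transformation f"
  shows "distr lborel borel f = lborel"
proof (rule lborel_eqI[symmetric])
  have lin: "linear f" using f by (rule orthogonal_transformation_linear)
  then have cont: "continuous_on UNIV f" by (simp add: linear_conv_bounded_linear linear_continuous_on)
  then have meas[measurable]: "f \<in> borel_measurable borel" by (rule borel_measurable_continuous_onI)
  show "sets (distr lborel borel f) = sets borel" by simp
  fix l u :: "real^2"
  assume le: "\<And>b. b \<in> Basis \<Longrightarrow> l \<bullet> b \<le> u \<bullet> b"
  have bij: "bij f" using f by (rule orthogonal_transformation_bij)
  have g: "orthogonal_transformation (inv f)" using f by (rule orthogonal_transformation_inv)
  have pre: "f -` box l u = inv f ` box l u"
    using bij by (simp add: bij_vimage_eq_inv_image)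
  have open_pre: "open (f -` box l u)"
    using cont by (simp add: continuous_on_open_vimage open_box)
  have bnd: "bounded (inv f ` box l u)"
    using g by (intro bounded_linear_image) (auto simp: orthogonal_transformation_linear linear_linear)
  have "emeasure (distr lborel borel f) (box l u) = emeasure lborel (f -` box l u)"
    by (subst emeasure_distr) auto
  also have "\<dots> = ennreal (measure lborel (f -` box l u))"
    using open_pre bnd pre by (intro emeasure_lborel_measure_bounded) auto
  also have "measure lborel (f -` box l u) = measure lebesgue (inv f ` box l u)"
    using open_pre pre by simp
  also have "\<dots> = measure lebesgue (box l u)"
    using g by (intro measure_orthogonal_image) auto
  also have "\<dots> = measure lborel (box l u)" by simp
  also have "ennreal \<dots> = emeasure lborel (box l u)"
    by (rule emeasure_lborel_measure_bounded[symmetric]) auto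
  finally show "emeasure (distr lborel borel f) (box l u) = (\<Prod>b\<in>Basis. (u - l) \<bullet> b)"
    using le by (simp add: emeasure_lborel_box_eq)
qed

lemma nn_integral_orth_R2:
  fixes f :: "real^2 \<Rightarrow> real^2"
  assumes f: "orthogonal_transformation f" and [measurable]: "\<phi> \<in> borel_measurable borel"
  shows "(\<integral>\<^sup>+x. \<phi> x \<partial>lborel) = (\<integral>\<^sup>+x. \<phi> (f x) \<partial>lborel)"
proof -
  have lin: "linear f" using f by (rule orthogonal_transformation_linear)
  then have cont: "continuous_on UNIV f" by (simp add: linear_conv_bounded_linear linear_continuous_on)
  then have meas[measurable]: "f \<in> borel_measurable borel" by (rule borel_measurable_continuous_onI)
  have "(\<integral>\<^sup>+x. \<phi> x \<partial>lborel) = (\<integral>\<^sup>+x. \<phi> x \<partial>distr lborel borel f)"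
    using distr_orth_R2[OF f] by simp
  also have "\<dots> = (\<integral>\<^sup>+x. \<phi> (f x) \<partial>lborel)"
    by (subst nn_integral_distr) auto
  finally show ?thesis .
qed

definition hh :: "real \<Rightarrow> ennreal" where
  "hh r = (\<integral>\<^sup>+x. ennreal (exp (-pi*x\<^sup>2)) * indicator {r/2<..} x \<partial>lborel)"

lemma gauss_one: "(\<integral>\<^sup>+x. ennreal (exp (-pi*x\<^sup>2)) \<partial>lborel) = 1"
proof -
  define \<sigma> where "\<sigma> = 1 / sqrt (2*pi)"
  have s2: "\<sigma>\<^sup>2 = 1/(2*pi)" unfolding \<sigma>_def by (simp add: power_divide)
  have sp: "\<sigma> > 0" unfolding \<sigma>_def by simp
  have nd: "normal_density 0 \<sigma> x = exp (-pi*x\<^sup>2)" for x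
    unfolding normal_density_def s2 using sp by (simp add: field_simps)
  interpret prob_space "density lborel (normal_density 0 \<sigma>)" using sp by (rule prob_space_normal_density)
  have "1 = emeasure (density lborel (normal_density 0 \<sigma>)) UNIV" using emeasure_space_1 by simp
  also have "\<dots> = (\<integral>\<^sup>+x. ennreal (exp (-pi*x\<^sup>2)) \<partial>lborel)"
    by (subst emeasure_density) (auto simp: nd)
  finally show ?thesis ..
qed

lemma norm_sq_basis: "exp (-pi * (norm (c::real^2))\<^sup>2) = (\<Prod>b\<in>Basis. exp (-pi * (c \<bullet> b)\<^sup>2))"
proof -
  have "(norm c)\<^sup>2 = (\<Sum>b\<in>Basis. (c \<bullet> b)\<^sup>2)"
  proof -
    have "inner c c = (\<Sum>b\<in>Basis. (c \<bullet> b) * (c \<bullet> b))" by (rule euclidean_inner)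
    then show ?thesis unfolding power2_norm_eq_inner by (simp only: power2_eq_square)
  qed
  then have "-pi * (norm c)\<^sup>2 = (\<Sum>b\<in>Basis. -pi * (c \<bullet> b)\<^sup>2)"
    by (simp add: sum_distrib_left)
  then show ?thesis by (simp add: exp_sum)
qed

lemma gauss_halfplane:
  "(\<integral>\<^sup>+c. ennreal (exp (-pi*(norm c)\<^sup>2)) * indicator {c::real^2. t < c$1} c \<partial>lborel)
    = (\<integral>\<^sup>+x. ennreal (exp (-pi*x\<^sup>2)) * indicator {t<..} x \<partial>lborel)"
proof -
  define e :: "real^2" where "e = axis 1 1"
  have eB: "e \<in> Basis" unfolding e_def by simp
  define F where "F b x = (if b = e then ennreal (exp (-pi*x\<^sup>2)) * indicator {t<..} x else ennreal (exp (-pi*x\<^sup>2)))" for b and x :: real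
  have Fm[measurable]: "F b \<in> borel_measurable borel" for b unfolding F_def by measurable
  have ce: "c \<bullet> e = c $ 1" for c :: "real^2" unfolding e_def by (simp add: inner_axis)
  have pt: "ennreal (exp (-pi*(norm c)\<^sup>2)) * indicator {c::real^2. t < c$1} c = (\<Prod>b\<in>Basis. F b (c \<bullet> b))" for c
  proof -
    have "(\<Prod>b\<in>Basis. F b (c \<bullet> b)) = F e (c \<bullet> e) * (\<Prod>b\<in>Basis-{e}. F b (c \<bullet> b))"
      using eB by (simp add: prod.remove)
    also have "(\<Prod>b\<in>Basis-{e}. F b (c \<bullet> b)) = (\<Prod>b\<in>Basis-{e}. ennreal (exp (-pi * (c \<bullet> b)\<^sup>2)))"
      by (intro prod.cong) (auto simp: F_def)
    also have "\<dots> = ennreal (\<Prod>b\<in>Basis-{e}. exp (-pi * (c \<bullet> b)\<^sup>2))"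
      by (simp add: prod_ennreal)
    finally have "(\<Prod>b\<in>Basis. F b (c \<bullet> b)) = ennreal (exp (-pi*(c \<bullet> e)\<^sup>2)) * ennreal (\<Prod>b\<in>Basis-{e}. exp (-pi * (c \<bullet> b)\<^sup>2)) * indicator {t<..} (c \<bullet> e)"
      by (simp add: F_def mult_ac)
    also have "ennreal (exp (-pi*(c \<bullet> e)\<^sup>2)) * ennreal (\<Prod>b\<in>Basis-{e}. exp (-pi * (c \<bullet> b)\<^sup>2)) = ennreal (\<Prod>b\<in>Basis. exp (-pi * (c \<bullet> b)\<^sup>2))"
      using eB by (simp add: prod.remove ennreal_mult'[symmetric] prod_nonneg)
    also have "\<dots> = ennreal (exp (-pi*(norm c)\<^sup>2))" using norm_sq_basis[of c] by simp
    finally show ?thesis by (simp add: ce indicator_def)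
  qed
  have "(\<integral>\<^sup>+c. ennreal (exp (-pi*(norm c)\<^sup>2)) * indicator {c::real^2. t < c$1} c \<partial>lborel)
      = (\<integral>\<^sup>+c. (\<Prod>b\<in>Basis. F b (c \<bullet> b)) \<partial>lborel)" by (rule nn_integral_cong) (rule pt)
  also have "\<dots> = (\<Prod>b\<in>Basis. (\<integral>\<^sup>+x. F b x \<partial>lborel))"
    by (rule nn_integral_lborel_prod) auto
  also have "\<dots> = (\<integral>\<^sup>+x. F e x \<partial>lborel) * (\<Prod>b\<in>Basis-{e}. (\<integral>\<^sup>+x. F b x \<partial>lborel))"
    using eB by (simp add: prod.remove)
  also have "(\<Prod>b\<in>Basis-{e}. (\<integral>\<^sup>+x. F b x \<partial>lborel)) = 1"
    by (intro prod.neutral) (auto simp: F_def gauss_one[simplified])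
  finally show ?thesis by (simp add: F_def)
qed

lemma H_eq:
  fixes w :: "real^2"
  assumes "w \<noteq> 0"
  shows "(\<integral>\<^sup>+c. ennreal (exp (-pi*(norm c)\<^sup>2)) * indicator {c. norm (c + w) < norm c} c \<partial>lborel) = hh (norm w)"
proof -
  define a :: "real^2" where "a = (- norm w) *\<^sub>R axis 1 1"
  have na: "norm a = norm w" unfolding a_def by simp
  obtain f where f: "orthogonal_transformation f" and fa: "f a = w"
    using orthogonal_transformation_exists[OF na] by blast
  have lin: "linear f" using f by (rule orthogonal_transformation_linear)
  have nw: "norm w > 0" using assms by simp
  have key: "norm (f c + w) < norm (f c) \<longleftrightarrow> norm w / 2 < c $ 1" for c
  proof -
    have "f c + w = f (c + a)" using lin fa by (simp add: linear_add)
    then have e1: "norm (f c + w) = norm (c + a)" using f by (simp add: orthogonal_transformation_norm)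
    have e2: "norm (f c) = norm c" using f by (simp add: orthogonal_transformation_norm)
    have ca: "c \<bullet> a = - norm w * c$1" unfolding a_def by (simp add: inner_axis)
    have aa: "a \<bullet> a = norm w * norm w" using na by (simp add: power2_norm_eq_inner[symmetric] power2_eq_square)
    have ip: "(c+a) \<bullet> (c+a) = c \<bullet> c + 2*(c \<bullet> a) + a \<bullet> a"
      by (simp add: inner_add_left inner_add_right inner_commute)
    have "norm (c + a) < norm c \<longleftrightarrow> norm w * norm w < norm w * (2 * c$1)"
      unfolding norm_lt ip ca aa by (simp add: algebra_simps)
    also have "\<dots> \<longleftrightarrow> norm w < 2 * c$1" using nw by (rule mult_less_cancel_left_pos)
    finally show ?thesis using e1 e2 by linarith
  qed
  have "(\<integral>\<^sup>+c. ennreal (exp (-pi*(norm c)\<^sup>2)) * indicator {c. norm (c + w) < norm c} c \<partial>lborel)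
      = (\<integral>\<^sup>+c. ennreal (exp (-pi*(norm (f c))\<^sup>2)) * indicator {c. norm (c + w) < norm c} (f c) \<partial>lborel)"
    by (rule nn_integral_orth_R2[OF f]) measurable
  also have "\<dots> = (\<integral>\<^sup>+c. ennreal (exp (-pi*(norm c)\<^sup>2)) * indicator {c::real^2. norm w / 2 < c$1} c \<partial>lborel)"
    using f key by (intro nn_integral_cong) (simp add: orthogonal_transformation_norm indicator_def)
  also have "\<dots> = hh (norm w)" unfolding hh_def by (rule gauss_halfplane)
  finally show ?thesis .
qed

lemma hh_measurable[measurable]: "hh \<in> borel_measurable borel"
proof -
  have "hh = (\<lambda>r. \<integral>\<^sup>+x. ennreal (exp (-pi*x\<^sup>2)) * (if r/2 < x then 1 else 0) \<partial>lborel)"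
    by (auto simp: hh_def indicator_def fun_eq_iff intro!: nn_integral_cong)
  also have "\<dots> \<in> borel_measurable borel" by measurable
  finally show ?thesis .
qed

definition f2 :: "(real^2) \<times> (real^2) \<Rightarrow> ennreal" where
  "f2 p = ennreal (exp (-pi*(norm (snd p))\<^sup>2)) * indicator {p. norm (fst p) < norm (snd p)} p"

lemma f2_measurable[measurable]: "f2 \<in> borel_measurable (lborel \<Otimes>\<^sub>M lborel)"
  unfolding f2_def by measurable

lemma nn_integral_translate:
  fixes c :: "'a::euclidean_space"
  assumes [measurable]: "g \<in> borel_measurable borel"
  shows "(\<integral>\<^sup>+x. g x \<partial>lborel) = (\<integral>\<^sup>+x. g (c + x) \<partial>lborel)"
proof -
  have "(\<integral>\<^sup>+x. g x \<partial>lborel) = (\<integral>\<^sup>+x. g x \<partial>distr lborel borel ((+) c))"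
    by (simp add: lborel_distr_plus)
  also have "\<dots> = (\<integral>\<^sup>+x. g (c + x) \<partial>lborel)"
    by (subst nn_integral_distr) auto
  finally show ?thesis .
qed

lemma comp_chain:
  assumes [measurable]: "\<phi> \<in> borel_measurable borel"
  shows "(\<integral>\<^sup>+p. f2 p * \<phi> (norm (fst p - snd p)) \<partial>(lborel \<Otimes>\<^sub>M lborel)) = (\<integral>\<^sup>+r. rad r * (hh r * \<phi> r) \<partial>lborel)"
proof -
  define K where "K w c = ennreal (exp (-pi*(norm c)\<^sup>2)) * indicator {c. norm (c + w) < norm c} c * \<phi> (norm w)"
    for w c :: "real^2"
  have Km[measurable]: "case_prod K \<in> borel_measurable (lborel \<Otimes>\<^sub>M lborel)"
    unfolding K_def by measurable
  have "(\<integral>\<^sup>+p. f2 p * \<phi> (norm (fst p - snd p)) \<partial>(lborel \<Otimes>\<^sub>M lborel))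
      = (\<integral>\<^sup>+c. (\<integral>\<^sup>+b. f2 (b, c) * \<phi> (norm (b - c)) \<partial>lborel) \<partial>lborel)"
    by (subst lborel_pair.nn_integral_snd[symmetric]) auto
  also have "\<dots> = (\<integral>\<^sup>+c. (\<integral>\<^sup>+w. K w c \<partial>lborel) \<partial>lborel)"
  proof (rule nn_integral_cong)
    fix c :: "real^2"
    have "(\<integral>\<^sup>+b. f2 (b, c) * \<phi> (norm (b - c)) \<partial>lborel) = (\<integral>\<^sup>+w. f2 (c + w, c) * \<phi> (norm ((c + w) - c)) \<partial>lborel)"
      by (rule nn_integral_translate) measurable
    also have "\<dots> = (\<integral>\<^sup>+w. K w c \<partial>lborel)"
      by (intro nn_integral_cong) (simp add: K_def f2_def indicator_def add.commute)
    finally show "(\<integral>\<^sup>+b. f2 (b, c) * \<phi> (norm (b - c)) \<partial>lborel) = (\<integral>\<^sup>+w. K w c \<partial>lborel)" .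
  qed
  also have "\<dots> = (\<integral>\<^sup>+w. (\<integral>\<^sup>+c. K w c \<partial>lborel) \<partial>lborel)"
    by (rule lborel_pair.Fubini') measurable
  also have "\<dots> = (\<integral>\<^sup>+w. hh (norm w) * \<phi> (norm w) \<partial>(lborel::(real^2) measure))"
  proof (rule nn_integral_cong_AE)
    show "AE w in lborel. (\<integral>\<^sup>+c. K w c \<partial>lborel) = hh (norm w) * \<phi> (norm w)"
      using AE_lborel_singleton[of "0::real^2"]
    proof eventually_elim
      case (elim w)
      have "(\<integral>\<^sup>+c. K w c \<partial>lborel) = (\<integral>\<^sup>+c. ennreal (exp (-pi*(norm c)\<^sup>2)) * indicator {c. norm (c + w) < norm c} c \<partial>lborel) * \<phi> (norm w)"
        unfolding K_def by (rule nn_integral_multc) measurable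
      also have "\<dots> = hh (norm w) * \<phi> (norm w)" using elim by (subst H_eq) auto
      finally show ?case .
    qed
  qed
  also have "\<dots> = (\<integral>\<^sup>+r. rad r * (hh r * \<phi> r) \<partial>lborel)"
    by (rule polar_R2) measurable
  finally show ?thesis .
qed

lemma f2_total: "(\<integral>\<^sup>+p. f2 p \<partial>(lborel \<Otimes>\<^sub>M lborel)) = 1"
proof -
  have "(\<integral>\<^sup>+p. f2 p \<partial>(lborel \<Otimes>\<^sub>M lborel)) = (\<integral>\<^sup>+c. (\<integral>\<^sup>+b. f2 (b, c) \<partial>lborel) \<partial>lborel)"
    by (subst lborel_pair.nn_integral_snd[symmetric]) auto
  also have "\<dots> = (\<integral>\<^sup>+c. ennreal (exp (-pi*(norm c)\<^sup>2) * (pi * (norm c)\<^sup>2)) \<partial>(lborel::(real^2) measure))"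
  proof (rule nn_integral_cong)
    fix c :: "real^2"
    have "(\<integral>\<^sup>+b. f2 (b, c) \<partial>lborel) = (\<integral>\<^sup>+b. ennreal (exp (-pi*(norm c)\<^sup>2)) * indicator (ball 0 (norm c)) b \<partial>(lborel::(real^2) measure))"
      by (auto intro!: nn_integral_cong simp: f2_def indicator_def dist_norm)
    also have "\<dots> = ennreal (exp (-pi*(norm c)\<^sup>2)) * emeasure lborel (ball (0::real^2) (norm c))"
      by (rule nn_integral_cmult_indicator) auto
    also have "\<dots> = ennreal (exp (-pi*(norm c)\<^sup>2) * (pi * (norm c)\<^sup>2))"
      by (simp add: emeasure_ball_R2 ennreal_mult')
    finally show "(\<integral>\<^sup>+b. f2 (b, c) \<partial>lborel) = ennreal (exp (-pi*(norm c)\<^sup>2) * (pi * (norm c)\<^sup>2))" .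
  qed
  also have "\<dots> = (\<integral>\<^sup>+r. rad r * ennreal (exp (-pi*r\<^sup>2) * (pi * r\<^sup>2)) \<partial>lborel)"
    by (rule polar_R2[where \<phi>="\<lambda>r. ennreal (exp (-pi*r\<^sup>2) * (pi * r\<^sup>2))"]) measurable
  also have "\<dots> = (\<integral>\<^sup>+r. ennreal (2*pi\<^sup>2 * r^3 * exp (-pi*r\<^sup>2)) * indicator {0..} r \<partial>lborel)"
    by (intro nn_integral_cong) (auto simp: rad_def ennreal_mult'[symmetric] power2_eq_square power3_eq_cube mult_ac split: split_indicator)
  also have "\<dots> = 0 - (- (1 + pi * 0\<^sup>2) * exp (- pi * 0\<^sup>2))"
  proof (rule nn_integral_FTC_atLeast[where F="\<lambda>r. - (1 + pi * r\<^sup>2) * exp (- pi * r\<^sup>2)"])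
    show "(\<lambda>r. 2*pi\<^sup>2 * r^3 * exp (-pi*r\<^sup>2)) \<in> borel_measurable borel" by measurable
    show "DERIV (\<lambda>r. - (1 + pi * r\<^sup>2) * exp (- pi * r\<^sup>2)) x :> 2*pi\<^sup>2 * x^3 * exp (-pi*x\<^sup>2)" for x
      by (rule derivative_eq_intros refl | simp)+ (simp add: algebra_simps power2_eq_square power3_eq_cube)
    show "0 \<le> 2*pi\<^sup>2 * x^3 * exp (-pi*x\<^sup>2)" if "0 \<le> x" for x using that by simp
    show "((\<lambda>r. - (1 + pi * r\<^sup>2) * exp (- pi * r\<^sup>2)) \<longlongrightarrow> 0) at_top" by real_asymp
  qed
  also have "\<dots> = 1" by simp
  finally show ?thesis .
qed

lemma integrable_gauss: "integrable lborel (\<lambda>x::real. exp (- x\<^sup>2))"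
proof -
  have "integrable lborel (\<lambda>x. sqrt pi * normal_density 0 (1 / sqrt 2) x)"
    by (intro integrable_mult_right integrable_normal_density) simp
  moreover have "sqrt pi * normal_density 0 (1 / sqrt 2) x = exp (- x\<^sup>2)" for x
    by (simp add: normal_density_def power_divide real_sqrt_mult)
  ultimately show ?thesis by simp
qed

lemma nn_gauss_tail: "(\<integral>\<^sup>+x. ennreal (exp (- x\<^sup>2)) * indicator {y::real<..} x \<partial>lborel) = ennreal (LBINT t:{y<..}. exp (- t\<^sup>2))"
proof -
  have int: "integrable lborel (\<lambda>x. indicator {y<..} x *\<^sub>R exp (- x\<^sup>2))"
    by (intro integrable_mult_indicator integrable_gauss) auto
  have "(\<integral>\<^sup>+x. ennreal (exp (- x\<^sup>2)) * indicator {y<..} x \<partial>lborel) = (\<integral>\<^sup>+x. ennreal (indicator {y<..} x *\<^sub>R exp (- x\<^sup>2)) \<partial>lborel)"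
    by (intro nn_integral_cong) (auto split: split_indicator)
  also have "\<dots> = ennreal (\<integral>x. indicator {y<..} x *\<^sub>R exp (- x\<^sup>2) \<partial>lborel)"
    by (rule nn_integral_eq_integral[OF int]) auto
  finally show ?thesis by (simp add: set_lebesgue_integral_def)
qed

lemma LB_nonneg: "0 \<le> (LBINT t:{y::real<..}. exp (- t\<^sup>2))"
  unfolding set_lebesgue_integral_def
  by (rule integral_nonneg_AE, rule AE_I2) (simp add: indicator_def)

lemma hh_erfc: "hh r = ennreal (erfc (sqrt pi * r / 2) / 2)"
proof -
  have sp: "sqrt pi > 0" by simp
  have "hh r = ennreal \<bar>1 / sqrt pi\<bar> * (\<integral>\<^sup>+x. ennreal (exp (-pi*(0 + 1 / sqrt pi * x)\<^sup>2)) * indicator {r/2<..} (0 + 1 / sqrt pi * x) \<partial>lborel)"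
    unfolding hh_def by (rule nn_integral_real_affine) auto
  also have "(\<integral>\<^sup>+x. ennreal (exp (-pi*(0 + 1 / sqrt pi * x)\<^sup>2)) * indicator {r/2<..} (0 + 1 / sqrt pi * x) \<partial>lborel)
      = (\<integral>\<^sup>+x. ennreal (exp (- x\<^sup>2)) * indicator {sqrt pi * r / 2<..} x \<partial>lborel)"
  proof (intro nn_integral_cong)
    fix x :: real
    have "pi*(0 + 1 / sqrt pi * x)\<^sup>2 = x\<^sup>2" using sp by (simp add: power_divide power_mult_distrib)
    moreover have "r/2 < 0 + 1 / sqrt pi * x \<longleftrightarrow> sqrt pi * r / 2 < x"
      using sp by (auto simp: field_simps)
    ultimately show "ennreal (exp (-pi*(0 + 1 / sqrt pi * x)\<^sup>2)) * indicator {r/2<..} (0 + 1 / sqrt pi * x)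
      = ennreal (exp (- x\<^sup>2)) * indicator {sqrt pi * r / 2<..} x"
      by (simp add: indicator_def)
  qed
  also have "\<dots> = ennreal (LBINT t:{sqrt pi * r / 2<..}. exp (- t\<^sup>2))" by (rule nn_gauss_tail)
  also have "ennreal \<bar>1 / sqrt pi\<bar> * \<dots> = ennreal (1 / sqrt pi * (LBINT t:{sqrt pi * r / 2<..}. exp (- t\<^sup>2)))"
    by (subst ennreal_mult[symmetric]) (auto simp: LB_nonneg)
  also have "1 / sqrt pi * (LBINT t:{sqrt pi * r / 2<..}. exp (- t\<^sup>2)) = erfc (sqrt pi * r / 2) / 2"
    unfolding erfc_def by simp
  finally show ?thesis .
qed

definition gdens :: "real \<Rightarrow> ennreal" where
  "gdens x = ennreal (if 0 < x then pi * x * erfc (sqrt pi * x / 2) else 0)"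

lemma rad_hh: "rad r * hh r = gdens r"
proof (cases "0 < r")
  case True
  have "erfc (sqrt pi * r / 2) \<ge> 0"
  proof -
    have "0 \<le> (LBINT t:{sqrt pi * r / 2<..}. exp (- t\<^sup>2))"
      by (rule LB_nonneg)
    then show ?thesis unfolding erfc_def by simp
  qed
  then show ?thesis using True
    by (simp add: rad_def hh_erfc gdens_def ennreal_mult'[symmetric])
next
  case False
  then show ?thesis by (auto simp: rad_def gdens_def indicator_def)
qed

lemma gdens_measurable[measurable]: "gdens \<in> borel_measurable borel"
proof -
  have "gdens = (\<lambda>r. rad r * hh r)" by (simp add: rad_hh fun_eq_iff)
  also have "\<dots> \<in> borel_measurable borel" by measurable
  finally show ?thesis .
qed

lemma incl_lemma:
  fixes Y :: "(real^2) set"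
  assumes nt: "nearest_two Y b c"
    and fin: "finite (Y \<inter> W)"
    and cU: "card (Y \<inter> U) = 1" and cV: "card (Y \<inter> V) = 1" and cW: "card (Y \<inter> W) = 0"
    and U: "U \<subseteq> ball 0 \<rho>" and V: "V \<subseteq> {v. \<rho> \<le> norm v \<and> norm v < \<sigma>}"
    and W: "W = ball 0 \<sigma> - U - V"
  shows "b \<in> U \<and> c \<in> V"
proof -
  obtain u where u: "Y \<inter> U = {u}" using cU card_1_singletonE by blast
  obtain v where v: "Y \<inter> V = {v}" using cV card_1_singletonE by blast
  have W0: "Y \<inter> W = {}" using fin cW by simp
  have uY: "u \<in> Y" "u \<in> U" using u by auto
  have vY: "v \<in> Y" "v \<in> V" using v by auto
  have nu: "norm u < \<rho>" using U uY by (auto simp: dist_norm)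
  have nv: "\<rho> \<le> norm v" "norm v < \<sigma>" using V vY by auto
  have inball: "y \<in> Y \<Longrightarrow> norm y < \<sigma> \<Longrightarrow> y = u \<or> y = v" for y
  proof -
    assume y: "y \<in> Y" "norm y < \<sigma>"
    have "y \<notin> W" using W0 y by auto
    then have "y \<in> U \<or> y \<in> V" using W y by (auto simp: dist_norm)
    then show ?thesis using u v y by auto
  qed
  from nt have bY: "b \<in> Y" and cY: "c \<in> Y" and bc: "b \<noteq> c" and nbc: "norm b \<le> norm c"
    and oth: "\<And>p. p \<in> Y - {b, c} \<Longrightarrow> norm c \<le> norm p"
    unfolding nearest_two_def by auto
  have c_lt: "norm c < \<sigma>"
  proof (rule ccontr)
    assume "\<not> norm c < \<sigma>"
    then have "u \<noteq> c" using nu nv by auto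
    then have "u = b" using oth[of u] uY nu nv \<open>\<not> norm c < \<sigma>\<close> by force
    then have "v \<noteq> b" "v \<noteq> c" using nu nv \<open>\<not> norm c < \<sigma>\<close> by auto
    then show False using oth[of v] vY nv \<open>\<not> norm c < \<sigma>\<close> by force
  qed
  have b_lt: "norm b < \<sigma>" using c_lt nbc by linarith
  have "c = u \<or> c = v" using inball[OF cY c_lt] .
  moreover have "b = u \<or> b = v" using inball[OF bY b_lt] .
  moreover have "norm u < norm v" using nu nv by linarith
  ultimately have "b = u \<and> c = v" using bc nbc by auto
  then show ?thesis using uY vY by auto
qed

context
  fixes M :: "'a measure" and X :: "'a \<Rightarrow> (real^2) set"
  assumes UP: "unit_poisson_process M X"
begin

interpretation prob_space M using UP unfolding unit_poisson_process_def by auto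

lemma UP_fin: "\<omega> \<in> space M \<Longrightarrow> bounded S \<Longrightarrow> finite (X \<omega> \<inter> S)"
  using UP unfolding unit_poisson_process_def by auto

lemma UP_meas: "S \<in> sets borel \<Longrightarrow> bounded S \<Longrightarrow> (\<lambda>\<omega>. card (X \<omega> \<inter> S)) \<in> measurable M (count_space UNIV)"
  using UP unfolding unit_poisson_process_def by auto

lemma UP_poisson: "S \<in> sets borel \<Longrightarrow> bounded S \<Longrightarrow>
   prob {\<omega> \<in> space M. card (X \<omega> \<inter> S) = k} = measure lborel S ^ k / fact k * exp (- measure lborel S)"
  using UP unfolding unit_poisson_process_def by auto

lemma UP_indep: "finite \<S> \<Longrightarrow> disjoint \<S> \<Longrightarrow> \<S> \<subseteq> sets borel \<Longrightarrow> (\<forall>S\<in>\<S>. bounded S) \<Longrightarrow>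
   indep_vars (\<lambda>_. count_space UNIV) (\<lambda>S \<omega>. card (X \<omega> \<inter> S)) \<S>"
  using UP unfolding unit_poisson_process_def by auto

lemma three_sets:
  assumes sets: "U \<in> sets borel" "V \<in> sets borel" "W \<in> sets borel"
    and bnd: "bounded U" "bounded V" "bounded W"
    and disj: "U \<inter> V = {}" "U \<inter> W = {}" "V \<inter> W = {}"
    and ne: "U \<noteq> {}" "V \<noteq> {}"
  shows "prob {\<omega> \<in> space M. card (X \<omega> \<inter> U) = 1 \<and> card (X \<omega> \<inter> V) = 1 \<and> card (X \<omega> \<inter> W) = 0}
     = measure lborel U * measure lborel V * exp (- (measure lborel U + measure lborel V + measure lborel W))"
proof -
  define \<S> where "\<S> = {U, V, W}"
  define k where "k S = (if S = W then 0 else 1::nat)" for S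
  have UV: "U \<noteq> V" using disj ne by auto
  have UW: "U \<noteq> W" using disj ne by auto
  have VW: "V \<noteq> W" using disj ne by auto
  have ind: "indep_vars (\<lambda>_. count_space UNIV) (\<lambda>S \<omega>. card (X \<omega> \<inter> S)) \<S>"
  proof (rule UP_indep)
    show "finite \<S>" unfolding \<S>_def by simp
    show "disjoint \<S>" unfolding \<S>_def disjoint_def using disj by auto
    show "\<S> \<subseteq> sets borel" unfolding \<S>_def using sets by auto
    show "\<forall>S\<in>\<S>. bounded S" unfolding \<S>_def using bnd by auto
  qed
  have "prob (\<Inter>S\<in>\<S>. (\<lambda>\<omega>. card (X \<omega> \<inter> S)) -` {k S} \<inter> space M) = (\<Prod>S\<in>\<S>. prob ((\<lambda>\<omega>. card (X \<omega> \<inter> S)) -` {k S} \<inter> space M))"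
    by (rule indep_varsD_finite[OF ind]) (auto simp: \<S>_def)
  moreover have "(\<Inter>S\<in>\<S>. (\<lambda>\<omega>. card (X \<omega> \<inter> S)) -` {k S} \<inter> space M)
      = {\<omega> \<in> space M. card (X \<omega> \<inter> U) = 1 \<and> card (X \<omega> \<inter> V) = 1 \<and> card (X \<omega> \<inter> W) = 0}"
    using UW VW by (auto simp: \<S>_def k_def)
  moreover have "prob ((\<lambda>\<omega>. card (X \<omega> \<inter> S)) -` {k S} \<inter> space M) = measure lborel S ^ k S / fact (k S) * exp (- measure lborel S)"
    if "S \<in> \<S>" for S
  proof -
    have "(\<lambda>\<omega>. card (X \<omega> \<inter> S)) -` {k S} \<inter> space M = {\<omega> \<in> space M. card (X \<omega> \<inter> S) = k S}" by auto
    moreover have "S \<in> sets borel" "bounded S" using that sets bnd by (auto simp: \<S>_def)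
    ultimately show ?thesis by (simp add: UP_poisson)
  qed
  ultimately have "prob {\<omega> \<in> space M. card (X \<omega> \<inter> U) = 1 \<and> card (X \<omega> \<inter> V) = 1 \<and> card (X \<omega> \<inter> W) = 0}
     = (\<Prod>S\<in>\<S>. measure lborel S ^ k S / fact (k S) * exp (- measure lborel S))"
    by (metis (no_types, lifting) prod.cong)
  also have "\<dots> = measure lborel U * exp (- measure lborel U) * (measure lborel V * exp (- measure lborel V)) * exp (- measure lborel W)"
    using UV UW VW by (simp add: \<S>_def k_def)
  also have "\<dots> = measure lborel U * measure lborel V * exp (- (measure lborel U + measure lborel V + measure lborel W))"
    by (simp add: exp_add[symmetric] exp_diff algebra_simps)
  finally show ?thesis .
qed

end

context
  fixes M :: "'a measure" and X :: "'a \<Rightarrow> (real^2) set" and B C :: "'a \<Rightarrow> real^2"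
  assumes UP: "unit_poisson_process M X"
    and Bm: "B \<in> borel_measurable M" and Cm: "C \<in> borel_measurable M"
    and AEn: "AE \<omega> in M. nearest_two (X \<omega>) (B \<omega>) (C \<omega>)"
begin

interpretation prob_space M using UP unfolding unit_poisson_process_def by auto

lemma BC_meas: "(\<lambda>\<omega>. (B \<omega>, C \<omega>)) \<in> measurable M (lborel \<Otimes>\<^sub>M lborel)"
proof -
  have eq: "measurable M lborel = measurable M (borel::(real^2) measure)" by (rule measurable_cong_sets) auto
  have "B \<in> measurable M lborel" using Bm eq by simp
  moreover have "C \<in> measurable M lborel" using Cm eq by simp
  ultimately show ?thesis by (rule measurable_Pair)
qed

lemma block:
  assumes Us: "U \<in> sets borel" and Vs: "V \<in> sets borel"
    and U: "U \<subseteq> ball 0 \<rho>" and V: "V \<subseteq> {v. \<rho> \<le> norm v \<and> norm v < \<sigma>}"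
  shows "ennreal (exp (-pi*\<sigma>\<^sup>2)) * emeasure lborel U * emeasure lborel V
     \<le> emeasure (distr M (lborel \<Otimes>\<^sub>M lborel) (\<lambda>\<omega>. (B \<omega>, C \<omega>))) (U \<times> V)"
proof (cases "U = {} \<or> V = {}")
  case True
  then show ?thesis by auto
next
  case False
  then have ne: "U \<noteq> {}" "V \<noteq> {}" by auto
  obtain v0 where v0: "v0 \<in> V" using ne(2) by auto
  have v0n: "\<rho> \<le> norm v0" "norm v0 < \<sigma>" using V v0 by auto
  have rs: "\<rho> \<le> \<sigma>" using v0n by linarith
  have s0: "0 \<le> \<sigma>" using v0n norm_ge_zero[of v0] by linarith
  define W where "W = ball 0 \<sigma> - U - V"
  have Ws: "W \<in> sets borel" unfolding W_def using Us Vs by auto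
  have bU: "bounded U" using U by (rule bounded_subset[OF bounded_ball])
  have "V \<subseteq> ball 0 \<sigma>" using V by (auto simp: dist_norm)
  then have bV: "bounded V" by (rule bounded_subset[OF bounded_ball])
  have "W \<subseteq> ball 0 \<sigma>" unfolding W_def by auto
  then have bW: "bounded W" by (rule bounded_subset[OF bounded_ball])
  have Un: "\<And>x. x \<in> U \<Longrightarrow> norm x < \<rho>" using U by (auto simp: dist_norm subset_iff)
  have Vn: "\<And>x. x \<in> V \<Longrightarrow> \<rho> \<le> norm x \<and> norm x < \<sigma>" using V by auto
  have disj: "U \<inter> V = {}" "U \<inter> W = {}" "V \<inter> W = {}"
    using Un Vn by (force simp: W_def)+
  define E where "E = {\<omega> \<in> space M. card (X \<omega> \<inter> U) = 1 \<and> card (X \<omega> \<inter> V) = 1 \<and> card (X \<omega> \<inter> W) = 0}"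
  have pE: "prob E = measure lborel U * measure lborel V * exp (- (measure lborel U + measure lborel V + measure lborel W))"
    unfolding E_def using three_sets[OF UP Us Vs Ws bU bV bW disj ne] .
  have un: "U \<union> V \<union> W = ball 0 \<sigma>"
    using Un Vn rs by (auto simp: W_def dist_norm) (meson less_le_trans)
  have finU: "emeasure lborel U \<noteq> top" using fin_bounded[OF Us bU] by simp
  have finV: "emeasure lborel V \<noteq> top" using fin_bounded[OF Vs bV] by simp
  have finW: "emeasure lborel W \<noteq> top" using fin_bounded[OF Ws bW] by simp
  have finUV: "emeasure lborel (U \<union> V) \<noteq> top"
    using fin_bounded[of "U \<union> V"] Us Vs bU bV by auto
  have "measure lborel (U \<union> V \<union> W) = measure lborel (U \<union> V) + measure lborel W"
    using finUV finW Us Vs Ws disj by (intro measure_Union) auto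
  also have "measure lborel (U \<union> V) = measure lborel U + measure lborel V"
    using finU finV Us Vs disj by (intro measure_Union) auto
  finally have "measure lborel U + measure lborel V + measure lborel W = measure lborel (ball (0::real^2) \<sigma>)"
    using un by simp
  also have "\<dots> = pi * \<sigma>\<^sup>2"
    using emeasure_ball_R2[OF s0, of 0] s0 by (simp add: measure_def)
  finally have sumW: "measure lborel U + measure lborel V + measure lborel W = pi * \<sigma>\<^sup>2" .
  have "ennreal (exp (-pi*\<sigma>\<^sup>2)) * emeasure lborel U * emeasure lborel V
      = ennreal (exp (-pi*\<sigma>\<^sup>2)) * ennreal (measure lborel U) * ennreal (measure lborel V)"
    by (simp add: emeasure_eq_ennreal_measure[OF finU] emeasure_eq_ennreal_measure[OF finV])
  also have "\<dots> = ennreal (prob E)"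
    unfolding pE sumW by (simp add: ennreal_mult'[symmetric] mult_ac)
  also have "\<dots> = emeasure M E" by (simp add: emeasure_eq_measure)
  also have "\<dots> \<le> emeasure M ((\<lambda>\<omega>. (B \<omega>, C \<omega>)) -` (U \<times> V) \<inter> space M)"
  proof (rule emeasure_mono_AE)
    show "AE x in M. x \<in> E \<longrightarrow> x \<in> (\<lambda>\<omega>. (B \<omega>, C \<omega>)) -` (U \<times> V) \<inter> space M"
      using AEn
    proof eventually_elim
      case (elim \<omega>)
      show ?case
      proof
        assume "\<omega> \<in> E"
        then have sp: "\<omega> \<in> space M" and c: "card (X \<omega> \<inter> U) = 1" "card (X \<omega> \<inter> V) = 1" "card (X \<omega> \<inter> W) = 0"
          unfolding E_def by auto
        have "finite (X \<omega> \<inter> W)" using UP_fin[OF UP sp bW] .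
        then have "B \<omega> \<in> U \<and> C \<omega> \<in> V"
          using incl_lemma[OF elim _ c U V W_def] by auto
        then show "\<omega> \<in> (\<lambda>\<omega>. (B \<omega>, C \<omega>)) -` (U \<times> V) \<inter> space M" using sp by auto
      qed
    qed
    show "(\<lambda>\<omega>. (B \<omega>, C \<omega>)) -` (U \<times> V) \<inter> space M \<in> sets M"
      using BC_meas Us Vs by (intro measurable_sets[OF BC_meas]) auto
  qed
  also have "\<dots> = emeasure (distr M (lborel \<Otimes>\<^sub>M lborel) (\<lambda>\<omega>. (B \<omega>, C \<omega>))) (U \<times> V)"
    using Us Vs by (subst emeasure_distr[OF BC_meas]) auto
  finally show ?thesis .
qed

end

definition shell :: "real \<Rightarrow> nat \<Rightarrow> (real^2) set" where
  "shell m k = {c. real k / m \<le> norm c \<and> norm c < (real k + 1) / m}"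

definition kc :: "real \<Rightarrow> real^2 \<Rightarrow> nat" where
  "kc m c = nat \<lfloor>m * norm c\<rfloor>"

lemma shell_borel[measurable]: "shell m k \<in> sets borel"
  unfolding shell_def by measurable

lemma shell_iff:
  assumes m: "m > 0"
  shows "c \<in> shell m k \<longleftrightarrow> kc m c = k"
proof -
  have "c \<in> shell m k \<longleftrightarrow> real k \<le> m * norm c \<and> m * norm c < real k + 1"
    using m by (simp add: shell_def field_simps)
  also have "\<dots> \<longleftrightarrow> \<lfloor>m * norm c\<rfloor> = int k"
    by (simp add: floor_eq_iff)
  also have "\<dots> \<longleftrightarrow> kc m c = k"
    using m by (auto simp: kc_def)
  finally show ?thesis .
qed

lemma kc_bounds:
  assumes m: "m > 0"
  shows "real (kc m c) / m \<le> norm c" "norm c < (real (kc m c) + 1) / m"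
  using shell_iff[OF m, of c "kc m c"] by (auto simp: shell_def)

definition ek :: "real \<Rightarrow> nat \<Rightarrow> real" where
  "ek m k = exp (-pi*((real k + 1) / m)\<^sup>2)"

definition G :: "real \<Rightarrow> (real^2) set \<Rightarrow> (real^2) set \<Rightarrow> (real^2) \<times> (real^2) \<Rightarrow> ennreal" where
  "G m U V p = (\<Sum>k. ennreal (ek m k) * indicator ((ball 0 (real k / m) \<inter> U) \<times> (shell m k \<inter> V)) p)"

lemma G_term_meas:
  assumes "U \<in> sets borel" "V \<in> sets borel"
  shows "(\<lambda>p. ennreal (ek m k) * indicator ((ball 0 (real k / m) \<inter> U) \<times> (shell m k \<inter> V)) p) \<in> borel_measurable (lborel \<Otimes>\<^sub>M lborel)"
proof -
  have "(ball 0 (real k / m) \<inter> U) \<times> (shell m k \<inter> V) \<in> sets (lborel \<Otimes>\<^sub>M lborel)"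
    using assms by (intro pair_measureI) auto
  then show ?thesis by measurable
qed

lemma G_meas:
  assumes "U \<in> sets borel" "V \<in> sets borel"
  shows "G m U V \<in> borel_measurable (lborel \<Otimes>\<^sub>M lborel)"
proof -
  have "(\<lambda>p. \<Sum>k. ennreal (ek m k) * indicator ((ball 0 (real k / m) \<inter> U) \<times> (shell m k \<inter> V)) p) \<in> borel_measurable (lborel \<Otimes>\<^sub>M lborel)"
    using G_term_meas[OF assms] by (rule borel_measurable_suminf_order)
  then show ?thesis unfolding G_def[abs_def] .
qed

lemma G_int:
  assumes "U \<in> sets borel" "V \<in> sets borel"
  shows "(\<integral>\<^sup>+p. G m U V p \<partial>(lborel \<Otimes>\<^sub>M lborel)) =
    (\<Sum>k. ennreal (ek m k) * (emeasure lborel (ball 0 (real k / m) \<inter> U) * emeasure lborel (shell m k \<inter> V)))"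
proof -
  have "(\<integral>\<^sup>+p. G m U V p \<partial>(lborel \<Otimes>\<^sub>M lborel)) =
     (\<Sum>k. \<integral>\<^sup>+p. ennreal (ek m k) * indicator ((ball 0 (real k / m) \<inter> U) \<times> (shell m k \<inter> V)) p \<partial>(lborel \<Otimes>\<^sub>M lborel))"
    unfolding G_def using G_term_meas[OF assms] by (intro nn_integral_suminf) auto
  also have "\<dots> = (\<Sum>k. ennreal (ek m k) * (emeasure lborel (ball 0 (real k / m) \<inter> U) * emeasure lborel (shell m k \<inter> V)))"
  proof (intro suminf_cong)
    fix k
    have s: "(ball 0 (real k / m) \<inter> U) \<times> (shell m k \<inter> V) \<in> sets (lborel \<Otimes>\<^sub>M lborel)"
      using assms by (intro pair_measureI) auto
    show "(\<integral>\<^sup>+p. ennreal (ek m k) * indicator ((ball 0 (real k / m) \<inter> U) \<times> (shell m k \<inter> V)) p \<partial>(lborel \<Otimes>\<^sub>M lborel))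
      = ennreal (ek m k) * (emeasure lborel (ball 0 (real k / m) \<inter> U) * emeasure lborel (shell m k \<inter> V))"
      using assms by (simp add: nn_integral_cmult_indicator[OF s] lborel.emeasure_pair_measure_Times)
  qed
  finally show ?thesis .
qed

lemma G_eval:
  assumes m: "m > 0"
  shows "G m U V (b, c) = ennreal (ek m (kc m c)) * indicator (ball 0 (real (kc m c) / m)) b * indicator U b * indicator V c"
proof -
  let ?K = "kc m c"
  have "(\<lambda>k. ennreal (ek m k) * indicator ((ball 0 (real k / m) \<inter> U) \<times> (shell m k \<inter> V)) (b, c))
     = (\<lambda>k. if k = ?K then ennreal (ek m k) * indicator (ball 0 (real k / m)) b * indicator U b * indicator V c else 0)"
    using shell_iff[OF m, of c] by (auto simp: indicator_def fun_eq_iff)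
  then have "G m U V (b, c) = (\<Sum>k. if k = ?K then ennreal (ek m k) * indicator (ball 0 (real k / m)) b * indicator U b * indicator V c else 0)"
    unfolding G_def by simp
  also have "\<dots> = ennreal (ek m ?K) * indicator (ball 0 (real ?K / m)) b * indicator U b * indicator V c"
    by (rule sums_unique[symmetric]) (rule sums_single)
  finally show ?thesis .
qed

lemma G_liminf: "f2 p * indicator (U \<times> V) p \<le> liminf (\<lambda>n. G (real (Suc n)) U V p)"
proof (cases p)
  case (Pair b c)
  show ?thesis
  proof (cases "b \<in> U \<and> c \<in> V \<and> norm b < norm c")
    case False
    then have "f2 p * indicator (U \<times> V) p = 0" using Pair by (auto simp: f2_def indicator_def)
    then show ?thesis by (simp only:) (rule zero_le)
  next
    case True
    define K where "K n = kc (real (Suc n)) c" for n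
    have mpos: "real (Suc n) > 0" for n by simp
    have lo: "real (K n) / real (Suc n) \<le> norm c" for n using kc_bounds(1)[OF mpos] unfolding K_def .
    have hi: "norm c < (real (K n) + 1) / real (Suc n)" for n using kc_bounds(2)[OF mpos] unfolding K_def .
    have inv0: "(\<lambda>n. inverse (real (Suc n))) \<longlonglongrightarrow> 0" by (rule LIMSEQ_inverse_real_of_nat)
    have up: "(real (K n) + 1) / real (Suc n) \<le> norm c + inverse (real (Suc n))" for n
      using lo[of n] by (simp add: add_divide_distrib inverse_eq_divide)
    have lim1: "(\<lambda>n. (real (K n) + 1) / real (Suc n)) \<longlonglongrightarrow> norm c"
    proof (rule tendsto_sandwich[where f="\<lambda>n. norm c" and h="\<lambda>n. norm c + inverse (real (Suc n))"])
      show "\<forall>\<^sub>F n in sequentially. norm c \<le> (real (K n) + 1) / real (Suc n)"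
        using hi by (intro always_eventually allI less_imp_le) 
      show "\<forall>\<^sub>F n in sequentially. (real (K n) + 1) / real (Suc n) \<le> norm c + inverse (real (Suc n))"
        using up by (intro always_eventually allI)
      show "(\<lambda>n. norm c) \<longlonglongrightarrow> norm c" by simp
      show "(\<lambda>n. norm c + inverse (real (Suc n))) \<longlonglongrightarrow> norm c" using tendsto_add[OF tendsto_const inv0, of "norm c"] by simp
    qed
    have lim2: "(\<lambda>n. ennreal (ek (real (Suc n)) (K n))) \<longlonglongrightarrow> ennreal (exp (-pi*(norm c)\<^sup>2))"
      unfolding ek_def by (intro tendsto_ennrealI tendsto_intros lim1)
    have d: "norm c - norm b > 0" using True by simp
    obtain N where N: "inverse (real (Suc N)) < norm c - norm b"
      using reals_Archimedean[OF d] by blast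
    have ev: "\<forall>\<^sub>F n in sequentially. G (real (Suc n)) U V p = ennreal (ek (real (Suc n)) (K n))"
    proof (rule eventually_sequentiallyI[of N])
      fix n assume "N \<le> n"
      then have "inverse (real (Suc n)) \<le> inverse (real (Suc N))" by (simp add: field_simps)
      then have "norm b < norm c - inverse (real (Suc n))" using N by linarith
      also have "norm c - inverse (real (Suc n)) < real (K n) / real (Suc n)"
        using hi[of n] by (simp add: add_divide_distrib inverse_eq_divide)
      finally have "b \<in> ball 0 (real (K n) / real (Suc n))" by (simp add: dist_norm)
      then show "G (real (Suc n)) U V p = ennreal (ek (real (Suc n)) (K n))"
        using True Pair G_eval[OF mpos[of n], of U V b c] by (simp add: K_def indicator_def)
    qed
    have "(\<lambda>n. G (real (Suc n)) U V p) \<longlonglongrightarrow> ennreal (exp (-pi*(norm c)\<^sup>2))"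
      using tendsto_cong[OF ev] lim2 by simp
    then have "liminf (\<lambda>n. G (real (Suc n)) U V p) = ennreal (exp (-pi*(norm c)\<^sup>2))"
      by (intro lim_imp_Liminf) auto
    moreover have "f2 p * indicator (U \<times> V) p = ennreal (exp (-pi*(norm c)\<^sup>2))"
      using True Pair by (simp add: f2_def indicator_def)
    ultimately show ?thesis by simp
  qed
qed

context
  fixes M :: "'a measure" and X :: "'a \<Rightarrow> (real^2) set" and B C :: "'a \<Rightarrow> real^2"
  assumes UP: "unit_poisson_process M X"
    and Bm: "B \<in> borel_measurable M" and Cm: "C \<in> borel_measurable M"
    and AEn: "AE \<omega> in M. nearest_two (X \<omega>) (B \<omega>) (C \<omega>)"
begin

lemma G_le:
  assumes Us: "U \<in> sets borel" and Vs: "V \<in> sets borel" and m: "m > 0"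
  shows "(\<integral>\<^sup>+p. G m U V p \<partial>(lborel \<Otimes>\<^sub>M lborel)) \<le> emeasure (distr M (lborel \<Otimes>\<^sub>M lborel) (\<lambda>\<omega>. (B \<omega>, C \<omega>))) (U \<times> V)"
proof -
  let ?D = "distr M (lborel \<Otimes>\<^sub>M lborel) (\<lambda>\<omega>. (B \<omega>, C \<omega>))"
  define R where "R k = (ball 0 (real k / m) \<inter> U) \<times> (shell m k \<inter> V)" for k
  have Rs: "R k \<in> sets ?D" for k
    unfolding R_def using Us Vs by (auto intro!: pair_measureI)
  have "(\<integral>\<^sup>+p. G m U V p \<partial>(lborel \<Otimes>\<^sub>M lborel)) =
    (\<Sum>k. ennreal (ek m k) * (emeasure lborel (ball 0 (real k / m) \<inter> U) * emeasure lborel (shell m k \<inter> V)))"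
    by (rule G_int[OF Us Vs])
  also have "\<dots> \<le> (\<Sum>k. emeasure ?D (R k))"
  proof (rule suminf_le)
    fix k
    have "ennreal (exp (-pi*((real k + 1) / m)\<^sup>2)) * emeasure lborel (ball 0 (real k / m) \<inter> U) * emeasure lborel (shell m k \<inter> V)
        \<le> emeasure ?D ((ball 0 (real k / m) \<inter> U) \<times> (shell m k \<inter> V))"
      using Us Vs by (intro block[OF UP Bm Cm AEn]) (auto simp: shell_def)
    then show "ennreal (ek m k) * (emeasure lborel (ball 0 (real k / m) \<inter> U) * emeasure lborel (shell m k \<inter> V)) \<le> emeasure ?D (R k)"
      by (simp add: ek_def R_def mult.assoc)
  qed auto
  also have "\<dots> = emeasure ?D (\<Union>k. R k)"
  proof (rule suminf_emeasure)
    show "range R \<subseteq> sets ?D" using Rs by auto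
    show "disjoint_family R"
      unfolding disjoint_family_on_def R_def using shell_iff[OF m] by auto
  qed
  also have "\<dots> \<le> emeasure ?D (U \<times> V)"
    using Us Vs by (intro emeasure_mono) (auto simp: R_def intro!: pair_measureI)
  finally show ?thesis .
qed

lemma lower:
  assumes Us: "U \<in> sets borel" and Vs: "V \<in> sets borel"
  shows "(\<integral>\<^sup>+p. f2 p * indicator (U \<times> V) p \<partial>(lborel \<Otimes>\<^sub>M lborel)) \<le> emeasure (distr M (lborel \<Otimes>\<^sub>M lborel) (\<lambda>\<omega>. (B \<omega>, C \<omega>))) (U \<times> V)"
proof -
  let ?D = "distr M (lborel \<Otimes>\<^sub>M lborel) (\<lambda>\<omega>. (B \<omega>, C \<omega>))"
  have "(\<integral>\<^sup>+p. f2 p * indicator (U \<times> V) p \<partial>(lborel \<Otimes>\<^sub>M lborel)) \<le> (\<integral>\<^sup>+p. liminf (\<lambda>n. G (real (Suc n)) U V p) \<partial>(lborel \<Otimes>\<^sub>M lborel))"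
    by (intro nn_integral_mono G_liminf)
  also have "\<dots> \<le> liminf (\<lambda>n. \<integral>\<^sup>+p. G (real (Suc n)) U V p \<partial>(lborel \<Otimes>\<^sub>M lborel))"
    by (intro nn_integral_liminf G_meas Us Vs)
  also have "\<dots> \<le> limsup (\<lambda>n. \<integral>\<^sup>+p. G (real (Suc n)) U V p \<partial>(lborel \<Otimes>\<^sub>M lborel))"
    by (rule Liminf_le_Limsup) simp
  also have "\<dots> \<le> emeasure ?D (U \<times> V)"
    by (intro Limsup_bounded always_eventually allI G_le Us Vs) simp
  finally show ?thesis .
qed

end

lemma UNIV_pair_sets: "(UNIV :: ((real^2) \<times> (real^2)) set) \<in> sets (lborel \<Otimes>\<^sub>M lborel)"
  using sets.top[of "lborel \<Otimes>\<^sub>M lborel :: ((real^2) \<times> (real^2)) measure"] by (simp add: space_pair_measure)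

lemma UNIV_pair_sets': "(UNIV :: ((real^2) \<times> (real^2)) set) \<in> sets (borel \<Otimes>\<^sub>M borel)"
  using UNIV_pair_sets by simp

context
  fixes M :: "'a measure" and X :: "'a \<Rightarrow> (real^2) set" and B C :: "'a \<Rightarrow> real^2"
  assumes UP: "unit_poisson_process M X"
    and Bm: "B \<in> borel_measurable M" and Cm: "C \<in> borel_measurable M"
    and AEn: "AE \<omega> in M. nearest_two (X \<omega>) (B \<omega>) (C \<omega>)"
begin

interpretation prob_space M using UP unfolding unit_poisson_process_def by auto

lemma D_space: "emeasure (distr M (lborel \<Otimes>\<^sub>M lborel) (\<lambda>\<omega>. (B \<omega>, C \<omega>))) UNIV = 1"
proof -
  have "emeasure (distr M (lborel \<Otimes>\<^sub>M lborel) (\<lambda>\<omega>. (B \<omega>, C \<omega>))) UNIV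
      = emeasure M ((\<lambda>\<omega>. (B \<omega>, C \<omega>)) -` UNIV \<inter> space M)"
    by (rule emeasure_distr[OF BC_meas[OF UP Bm Cm AEn]]) (simp add: UNIV_pair_sets')
  also have "\<dots> = 1" by (simp add: emeasure_space_1)
  finally show ?thesis .
qed

lemma Q_space: "emeasure (density (lborel \<Otimes>\<^sub>M lborel) f2) UNIV = 1"
proof -
  have "emeasure (density (lborel \<Otimes>\<^sub>M lborel) f2) UNIV = (\<integral>\<^sup>+p. f2 p * indicator UNIV p \<partial>(lborel \<Otimes>\<^sub>M lborel))"
    by (rule emeasure_density) (auto simp: UNIV_pair_sets')
  also have "\<dots> = 1" using f2_total by simp
  finally show ?thesis .
qed

lemma rect_eq:
  assumes Us: "U \<in> sets borel" and Vs: "V \<in> sets borel"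
  shows "emeasure (density (lborel \<Otimes>\<^sub>M lborel) f2) (U \<times> V) = emeasure (distr M (lborel \<Otimes>\<^sub>M lborel) (\<lambda>\<omega>. (B \<omega>, C \<omega>))) (U \<times> V)"
proof -
  let ?D = "distr M (lborel \<Otimes>\<^sub>M lborel) (\<lambda>\<omega>. (B \<omega>, C \<omega>))"
  let ?Q = "density (lborel \<Otimes>\<^sub>M lborel) f2"
  have Qr: "emeasure ?Q (S \<times> T) \<le> emeasure ?D (S \<times> T)" if "S \<in> sets borel" "T \<in> sets borel" for S T
  proof -
    have "emeasure ?Q (S \<times> T) = (\<integral>\<^sup>+p. f2 p * indicator (S \<times> T) p \<partial>(lborel \<Otimes>\<^sub>M lborel))"
      using that by (intro emeasure_density) (auto intro!: pair_measureI)
    also have "\<dots> \<le> emeasure ?D (S \<times> T)" by (rule lower[OF UP Bm Cm AEn that])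
    finally show ?thesis .
  qed
  have spQ: "space ?Q = UNIV" by (simp add: space_pair_measure)
  have spD: "space ?D = UNIV" by (simp add: space_pair_measure)
  define A2 where "A2 = (- U) \<times> (UNIV :: (real^2) set)"
  define A3 where "A3 = U \<times> (- V)"
  have A2s: "A2 \<in> sets (lborel \<Otimes>\<^sub>M lborel)" unfolding A2_def using Us by (intro pair_measureI) auto
  have A3s: "A3 \<in> sets (lborel \<Otimes>\<^sub>M lborel)" unfolding A3_def using Us Vs by (intro pair_measureI) auto
  have Rs: "U \<times> V \<in> sets (lborel \<Otimes>\<^sub>M lborel)" using Us Vs by (intro pair_measureI) auto
  have compl: "UNIV - U \<times> V = A2 \<union> A3" by (auto simp: A2_def A3_def)
  have dj: "A2 \<inter> A3 = {}" by (auto simp: A2_def A3_def)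
  have cc: "UNIV - (A2 \<union> A3) = U \<times> V" by (auto simp: A2_def A3_def)
  have "emeasure ?Q (A2 \<union> A3) = emeasure ?Q A2 + emeasure ?Q A3"
    using A2s A3s dj by (intro plus_emeasure[symmetric]) auto
  also have "\<dots> \<le> emeasure ?D A2 + emeasure ?D A3"
    unfolding A2_def A3_def using Us Vs by (intro add_mono Qr) auto
  also have "\<dots> = emeasure ?D (A2 \<union> A3)"
    using A2s A3s dj by (intro plus_emeasure) auto
  finally have cmp: "emeasure ?Q (A2 \<union> A3) \<le> emeasure ?D (A2 \<union> A3)" .
  have finQ: "emeasure ?Q (U \<times> V) \<noteq> \<infinity>"
  proof -
    have "emeasure ?Q (U \<times> V) \<le> emeasure ?Q UNIV" by (intro emeasure_mono) (auto simp: UNIV_pair_sets')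
    then show ?thesis using Q_space by (auto simp: top_unique)
  qed
  have finD: "emeasure ?D (U \<times> V) \<noteq> \<infinity>"
  proof -
    have "emeasure ?D (U \<times> V) \<le> emeasure ?D UNIV" by (intro emeasure_mono) (auto simp: UNIV_pair_sets')
    then show ?thesis using D_space by (auto simp: top_unique)
  qed
  have "emeasure ?D (U \<times> V) = emeasure ?D (UNIV - (A2 \<union> A3))"
    using cc by simp
  also have "\<dots> = emeasure ?D UNIV - emeasure ?D (A2 \<union> A3)"
  proof -
    have "emeasure ?D (A2 \<union> A3) \<noteq> \<infinity>"
    proof -
      have "emeasure ?D (A2 \<union> A3) \<le> emeasure ?D UNIV" by (intro emeasure_mono) (auto simp: UNIV_pair_sets')
      then show ?thesis using D_space by (auto simp: top_unique)
    qed
    then show ?thesis using emeasure_compl[of "A2 \<union> A3" ?D] A2s A3s spD by auto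
  qed
  also have "\<dots> \<le> emeasure ?Q UNIV - emeasure ?Q (A2 \<union> A3)"
    unfolding D_space Q_space using cmp by (intro ennreal_minus_mono) auto
  also have "\<dots> = emeasure ?Q (UNIV - (A2 \<union> A3))"
  proof -
    have "emeasure ?Q (A2 \<union> A3) \<noteq> \<infinity>"
    proof -
      have "emeasure ?Q (A2 \<union> A3) \<le> emeasure ?Q UNIV" by (intro emeasure_mono) (auto simp: UNIV_pair_sets')
      then show ?thesis using Q_space by (auto simp: top_unique)
    qed
    then show ?thesis using emeasure_compl[of "A2 \<union> A3" ?Q] A2s A3s spQ by auto
  qed
  also have "\<dots> = emeasure ?Q (U \<times> V)"
    using cc by simp
  finally have "emeasure ?D (U \<times> V) \<le> emeasure ?Q (U \<times> V)" .
  then show ?thesis using Qr[OF Us Vs] by (rule antisym[rotated])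
qed

lemma D_eq_Q: "distr M (lborel \<Otimes>\<^sub>M lborel) (\<lambda>\<omega>. (B \<omega>, C \<omega>)) = density (lborel \<Otimes>\<^sub>M lborel) f2"
proof (rule measure_eqI_generator_eq[OF Int_stable_pair_measure_generator[of lborel lborel], where \<Omega>=UNIV and A="\<lambda>_. UNIV"])
  let ?E = "{a \<times> b |a b. a \<in> sets (lborel::(real^2) measure) \<and> b \<in> sets (lborel::(real^2) measure)}"
  show "?E \<subseteq> Pow UNIV" by auto
  show "sets (distr M (lborel \<Otimes>\<^sub>M lborel) (\<lambda>\<omega>. (B \<omega>, C \<omega>))) = sigma_sets UNIV ?E"
    by (simp add: sets_pair_measure)
  show "sets (density (lborel \<Otimes>\<^sub>M lborel) f2) = sigma_sets UNIV ?E"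
    by (simp add: sets_pair_measure)
  have "(UNIV :: ((real^2) \<times> (real^2)) set) \<in> ?E"
    by (rule CollectI, rule exI[of _ UNIV], rule exI[of _ UNIV]) auto
  then show "range (\<lambda>_. UNIV) \<subseteq> ?E" by auto
  show "(\<Union>i. UNIV) = (UNIV :: ((real^2) \<times> (real^2)) set)" by simp
  show "emeasure (distr M (lborel \<Otimes>\<^sub>M lborel) (\<lambda>\<omega>. (B \<omega>, C \<omega>))) UNIV \<noteq> \<infinity>" for i
    using D_space by simp
  show "emeasure (distr M (lborel \<Otimes>\<^sub>M lborel) (\<lambda>\<omega>. (B \<omega>, C \<omega>))) Y = emeasure (density (lborel \<Otimes>\<^sub>M lborel) f2) Y"
    if "Y \<in> ?E" for Y
    using that rect_eq by auto
qed

end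

theorem mainTheorem2:
  fixes M :: "'a measure" and X :: "'a \<Rightarrow> (real^2) set" and B C :: "'a \<Rightarrow> real^2"
  assumes "unit_poisson_process M X"
    and "B \<in> borel_measurable M" and "C \<in> borel_measurable M"
    and "AE \<omega> in M. nearest_two (X \<omega>) (B \<omega>) (C \<omega>)"
  shows "distributed M lborel (\<lambda>\<omega>. norm (B \<omega> - C \<omega>))
           (\<lambda>x. ennreal (if 0 < x then pi * x * erfc (sqrt pi * x / 2) else 0))"
proof -
  note UP = assms(1) and Bm = assms(2) and Cm = assms(3) and AEn = assms(4)
  have gd: "(\<lambda>x. ennreal (if 0 < x then pi * x * erfc (sqrt pi * x / 2) else 0)) = gdens"
    by (simp add: gdens_def fun_eq_iff)
  have BC: "(\<lambda>\<omega>. (B \<omega>, C \<omega>)) \<in> measurable M (lborel \<Otimes>\<^sub>M lborel)"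
    by (rule BC_meas[OF UP Bm Cm AEn])
  have hm: "(\<lambda>p::(real^2) \<times> (real^2). norm (fst p - snd p)) \<in> measurable (lborel \<Otimes>\<^sub>M lborel) lborel"
    by measurable
  have meas: "(\<lambda>\<omega>. norm (B \<omega> - C \<omega>)) \<in> measurable M lborel"
    using measurable_comp[OF BC hm] by (simp add: comp_def)
  have "distr M lborel (\<lambda>\<omega>. norm (B \<omega> - C \<omega>)) = distr (distr M (lborel \<Otimes>\<^sub>M lborel) (\<lambda>\<omega>. (B \<omega>, C \<omega>))) lborel (\<lambda>p. norm (fst p - snd p))"
    using distr_distr[OF hm BC] by (simp add: comp_def)
  also have "\<dots> = distr (density (lborel \<Otimes>\<^sub>M lborel) f2) lborel (\<lambda>p. norm (fst p - snd p))"
    by (simp only: D_eq_Q[OF UP Bm Cm AEn])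
  also have "\<dots> = density lborel gdens"
  proof (rule measure_eqI)
    show "sets (distr (density (lborel \<Otimes>\<^sub>M lborel) f2) lborel (\<lambda>p. norm (fst p - snd p))) = sets (density lborel gdens)"
      by simp
    fix A assume "A \<in> sets (distr (density (lborel \<Otimes>\<^sub>M lborel) f2) lborel (\<lambda>p. norm (fst p - snd p)))"
    then have A[measurable]: "A \<in> sets borel" by simp
    have "emeasure (distr (density (lborel \<Otimes>\<^sub>M lborel) f2) lborel (\<lambda>p. norm (fst p - snd p))) A
        = emeasure (density (lborel \<Otimes>\<^sub>M lborel) f2) ((\<lambda>p. norm (fst p - snd p)) -` A \<inter> space (density (lborel \<Otimes>\<^sub>M lborel) f2))"
      by (rule emeasure_distr) (use hm in auto)
    also have "\<dots> = (\<integral>\<^sup>+p. f2 p * indicator ((\<lambda>p. norm (fst p - snd p)) -` A \<inter> space (lborel \<Otimes>\<^sub>M lborel)) p \<partial>(lborel \<Otimes>\<^sub>M lborel))"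
    proof -
      have pres: "(\<lambda>p::(real^2) \<times> (real^2). norm (fst p - snd p)) -` A \<inter> space (lborel \<Otimes>\<^sub>M lborel) \<in> sets (lborel \<Otimes>\<^sub>M lborel)"
        by (rule measurable_sets[OF hm]) (use A in simp)
      show ?thesis by (simp only: space_density) (rule emeasure_density[OF f2_measurable pres])
    qed
    also have "\<dots> = (\<integral>\<^sup>+p. f2 p * indicator A (norm (fst p - snd p)) \<partial>(lborel \<Otimes>\<^sub>M lborel))"
      by (intro nn_integral_cong) (auto simp: indicator_def space_pair_measure)
    also have "\<dots> = (\<integral>\<^sup>+r. rad r * (hh r * indicator A r) \<partial>lborel)"
      by (rule comp_chain) measurable
    also have "\<dots> = (\<integral>\<^sup>+r. gdens r * indicator A r \<partial>lborel)"
      by (intro nn_integral_cong) (simp add: rad_hh[symmetric] mult.assoc)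
    also have "\<dots> = emeasure (density lborel gdens) A"
      by (rule emeasure_density[symmetric]) auto
    finally show "emeasure (distr (density (lborel \<Otimes>\<^sub>M lborel) f2) lborel (\<lambda>p. norm (fst p - snd p))) A = emeasure (density lborel gdens) A" .
  qed
  finally have eq: "distr M lborel (\<lambda>\<omega>. norm (B \<omega> - C \<omega>)) = density lborel gdens" .
  have gm: "gdens \<in> borel_measurable lborel" by simp
  show ?thesis unfolding gd distributed_def using eq gm meas by auto
qed


end
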